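(* (a) For all $y\ge x_0\ge0$, \[F'(y)=\exp\{-y^2/2+x_0^2/2\}F'(x_0)+\int_{x_0}^y\exp\{-y^2/2+z^2/2\}F(z)(F(z)-2)\,dz.\] (b) $\lim_{y\to\infty}e^{y^2/2}\frac{F'(y)}{y^2}=-c_0$. (c) $1<F(0)<2$. (d) $F$ is strictly decreasing on $[0,\infty)$.
   Context: $F:\mathbb{R}\to(0,\infty)$ is defined by $F(x)=V^\infty(1,x)=\lim_{\lambda\to\infty}V^\lambda(1,x)$, where $V^\lambda$ is the solution of $\partial_tV=\frac12\partial_x^2V-\frac12V^2$, $V(0,\cdot)=\lambda\delta_0$. It is known that $F$ is symmetric, $C^2$ on $\mathbb{R}$, positive, and is the unique such function satisfying $\frac{F''(y)}2+\frac y2F'(y)+F(y)-\frac{F(y)^2}2=0$, $F'(0)=0$, and $F(y)\sim c_0ye^{-y^2/2}$ as $y\to\infty$ (ratio tends to one), for some constant $c_0>0$; $c_0$ denotes this constant. *)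

theory Defs
  imports "HOL-Analysis.Analysis"
begin

end

theory Submission
  imports Defs "HOL-Real_Asymp.Real_Asymp"
begin

locale fsetup =
  fixes F F' F'' :: "real \<Rightarrow> real" and c0 :: real
  assumes deriv1: "\<And>x. (F has_real_derivative F' x) (at x)"
    and deriv2: "\<And>x. (F' has_real_derivative F'' x) (at x)"
    and pos: "\<And>x. F x > 0"
    and ode: "\<And>y. F'' y / 2 + y / 2 * F' y + F y - (F y)^2 / 2 = 0"
    and d0: "F' 0 = 0"
    and c0_pos: "c0 > 0"
    and asym: "((\<lambda>y. F y / (c0 * y * exp (- (y^2) / 2))) \<longlongrightarrow> 1) at_top"
begin

definition h where "h y = exp (y^2/2) * F' y"
definition hd where "hd y = exp (y^2/2) * (F y * (F y - 2))"

lemma ode': "F'' y = - y * F' y - 2 * F y + (F y)^2"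
  using ode[of y] by (simp add: field_simps)

lemma hD: "(h has_real_derivative hd y) (at y)"
proof -
  have "((\<lambda>y. exp (y^2/2) * F' y) has_real_derivative (exp (y^2/2) * (2*y/2)) * F' y + exp (y^2/2) * F'' y) (at y)"
    by (auto intro!: derivative_eq_intros deriv2)
  moreover have "(exp (y^2/2) * (2*y/2)) * F' y + exp (y^2/2) * F'' y = hd y"
    unfolding hd_def ode' by (simp add: algebra_simps power2_eq_square)
  ultimately show ?thesis unfolding h_def by simp
qed

lemma PhiD: "((\<lambda>y. F' y + y * F y) has_real_derivative F y * (F y - 1)) (at y)"
proof -
  have "((\<lambda>y. F' y + y * F y) has_real_derivative F'' y + (1 * F y + y * F' y)) (at y)"
    by (auto intro!: derivative_eq_intros deriv1 deriv2)
  moreover have "F'' y + (1 * F y + y * F' y) = F y * (F y - 1)"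
    unfolding ode' by (simp add: algebra_simps power2_eq_square)
  ultimately show ?thesis by simp
qed

lemma Fcont: "continuous_on S F"
  by (meson DERIV_isCont continuous_at_imp_continuous_on deriv1)
lemma F'cont: "continuous_on S F'"
  by (meson DERIV_isCont continuous_at_imp_continuous_on deriv2)
lemma hcont: "continuous_on S h"
  by (meson DERIV_isCont continuous_at_imp_continuous_on hD)

lemma ratio_eq: "eventually (\<lambda>y. F y = (F y / (c0 * y * exp (- (y^2) / 2))) * (c0 * (y * exp (- (y^2) / 2)))) at_top"
  using eventually_gt_at_top[of 0] by eventually_elim (use c0_pos in auto)

lemma Fto0: "(F \<longlongrightarrow> 0) at_top"
proof -
  have l: "((\<lambda>y::real. y * exp (- (y^2) / 2)) \<longlongrightarrow> 0) at_top" by real_asymp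
  have "((\<lambda>y. (F y / (c0 * y * exp (- (y^2) / 2))) * (c0 * (y * exp (- (y^2) / 2)))) \<longlongrightarrow> 1 * (c0 * 0)) at_top"
    by (intro tendsto_intros asym l)
  then show ?thesis using ratio_eq by (simp add: tendsto_cong)
qed

lemma yFto0: "((\<lambda>y. y * F y) \<longlongrightarrow> 0) at_top"
proof -
  have l: "((\<lambda>y::real. y * exp (- (y^2) / 2)) \<longlongrightarrow> 0) at_top" by real_asymp
  have l2: "((\<lambda>y::real. y * (y * exp (- (y^2) / 2))) \<longlongrightarrow> 0) at_top" by real_asymp
  have "((\<lambda>y. (F y / (c0 * y * exp (- (y^2) / 2))) * (c0 * (y * (y * exp (- (y^2) / 2))))) \<longlongrightarrow> 1 * (c0 * 0)) at_top"
    by (intro tendsto_intros asym l2)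
  moreover have "eventually (\<lambda>y. y * F y = (F y / (c0 * y * exp (- (y^2) / 2))) * (c0 * (y * (y * exp (- (y^2) / 2))))) at_top"
    using eventually_gt_at_top[of 0] by eventually_elim (use c0_pos in auto)
  ultimately show ?thesis by (simp add: tendsto_cong)
qed

lemma partb: "((\<lambda>y. exp (y^2 / 2) * F' y / y^2) \<longlongrightarrow> - c0) at_top"
proof -
  have "((\<lambda>y. h y / y^2) \<longlongrightarrow> - c0) at_top"
  proof (rule lhospital_at_top_at_top[where f'=hd and g'="\<lambda>y. 2*y"])
    show "filterlim (\<lambda>y::real. y^2) at_top at_top" by real_asymp
    show "eventually (\<lambda>x. 2*x \<noteq> (0::real)) at_top"
      using eventually_gt_at_top[of 0] by eventually_elim auto
    show "eventually (\<lambda>x. DERIV h x :> hd x) at_top" using hD by simp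
    show "eventually (\<lambda>x. DERIV (\<lambda>y::real. y^2) x :> 2*x) at_top"
      by (intro always_eventually allI) (auto intro!: derivative_eq_intros)
    have l: "((\<lambda>y. (F y / (c0 * y * exp (- (y^2) / 2))) * (c0 * ((F y - 2)/2))) \<longlongrightarrow> 1 * (c0 * ((0 - 2)/2))) at_top"
      by (intro tendsto_intros asym Fto0) simp
    have "eventually (\<lambda>y. hd y / (2*y) = (F y / (c0 * y * exp (- (y^2) / 2))) * (c0 * ((F y - 2)/2))) at_top"
      using eventually_gt_at_top[of 0] 
    proof eventually_elim
      case (elim y)
      have e: "exp (- (y^2) / 2) * exp (y^2/2) = 1" by (simp add: exp_add[symmetric])
      have "(F y / (c0 * y * exp (- (y^2) / 2))) * (c0 * ((F y - 2)/2)) = F y * (F y - 2) / (2 * y * exp (- (y^2) / 2))"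
        using c0_pos elim by (simp add: field_simps)
      also have "\<dots> = F y * (F y - 2) * exp (y^2/2) / (2 * y * (exp (- (y^2) / 2) * exp (y^2/2)))"
        using elim by (simp add: field_simps)
      also have "\<dots> = hd y / (2*y)" unfolding e hd_def by (simp add: field_simps)
      finally show ?case by simp
    qed
    then have ev: "eventually (\<lambda>y. (F y / (c0 * y * exp (- (y^2) / 2))) * (c0 * ((F y - 2)/2)) = hd y / (2*y)) at_top"
      by (rule eventually_mono) simp
    have l': "((\<lambda>y. (F y / (c0 * y * exp (- (y^2) / 2))) * (c0 * ((F y - 2)/2))) \<longlongrightarrow> - c0) at_top"
      using l by simp
    show "((\<lambda>x. hd x / (2*x)) \<longlongrightarrow> - c0) at_top" by (rule Lim_transform_eventually[OF l' ev])
  qed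
  then show ?thesis unfolding h_def by simp
qed


lemma parta:
  assumes "0 \<le> x0" "x0 \<le> y"
  shows "F' y = exp (- (y^2) / 2 + x0^2 / 2) * F' x0
                   + integral {x0..y} (\<lambda>z. exp (- (y^2) / 2 + z^2 / 2) * F z * (F z - 2))"
proof -
  have "(hd has_integral (h y - h x0)) {x0..y}"
    by (rule fundamental_theorem_of_calculus[OF assms(2)])
       (meson has_real_derivative_iff_has_vector_derivative has_vector_derivative_at_within hD)
  then have "((\<lambda>z. exp (- (y^2) / 2) * hd z) has_integral (exp (- (y^2) / 2) * (h y - h x0))) {x0..y}"
    by (rule has_integral_mult_right)
  moreover have "(\<lambda>z. exp (- (y^2) / 2) * hd z) = (\<lambda>z. exp (- (y^2) / 2 + z^2 / 2) * F z * (F z - 2))"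
    by (auto simp: hd_def exp_add[symmetric] algebra_simps)
  ultimately have i: "integral {x0..y} (\<lambda>z. exp (- (y^2) / 2 + z^2 / 2) * F z * (F z - 2)) = exp (- (y^2) / 2) * (h y - h x0)"
    by (simp add: integral_unique)
  have e: "exp (- (y^2) / 2) * exp (y^2/2) = 1" by (simp add: exp_add[symmetric])
  have e1: "exp (- (y^2) / 2) * (exp (y^2/2) * F' y) = F' y"
    by (simp only: mult.assoc[symmetric] e)
  have e2: "exp (- (y^2) / 2) * (exp (x0^2/2) * F' x0) = exp (- (y^2) / 2 + x0^2 / 2) * F' x0"
    by (simp only: exp_add mult.assoc)
  show ?thesis unfolding i unfolding h_def right_diff_distrib e1 e2 by simp
qed

lemma F'_h: "F' z = exp (- (z^2)/2) * h z"
  by (simp add: h_def mult.assoc[symmetric] exp_add[symmetric])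

lemma F'_le_h: "\<bar>F' z\<bar> \<le> \<bar>h z\<bar>"
proof -
  have "1 \<le> exp (z^2/2)" by simp
  then have "1 * \<bar>F' z\<bar> \<le> exp (z^2/2) * \<bar>F' z\<bar>" by (intro mult_right_mono) auto
  then show ?thesis by (simp add: h_def abs_mult)
qed

lemma hd_nonneg: "F x \<ge> 2 \<Longrightarrow> hd x \<ge> 0"
  using pos[of x] unfolding hd_def by (intro mult_nonneg_nonneg) auto
lemma hd_nonpos: "F x \<le> 2 \<Longrightarrow> hd x \<le> 0"
  using pos[of x] unfolding hd_def by (intro mult_nonneg_nonpos mult_nonneg_nonpos) auto
lemma hd_neg: "F x < 2 \<Longrightarrow> hd x < 0"
  using pos[of x] unfolding hd_def by (intro mult_pos_neg mult_pos_neg) auto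

lemma F'_nonneg: "h x \<ge> 0 \<Longrightarrow> F' x \<ge> 0"
proof -
  assume a: "h x \<ge> 0"
  have "0 \<le> exp (- (x^2)/2) * h x" using a by (intro mult_nonneg_nonneg) auto
  then show ?thesis using F'_h[of x] by linarith
qed
lemma F'_nonpos: "h x \<le> 0 \<Longrightarrow> F' x \<le> 0"
proof -
  assume a: "h x \<le> 0"
  have "exp (- (x^2)/2) * h x \<le> 0" using a by (intro mult_nonneg_nonpos) auto
  then show ?thesis using F'_h[of x] by linarith
qed
lemma F'_neg: "h x < 0 \<Longrightarrow> F' x < 0"
proof -
  assume a: "h x < 0"
  have "exp (- (x^2)/2) * h x < 0" using a by (intro mult_pos_neg) auto
  then show ?thesis using F'_h[of x] by linarith
qed

lemma not_gt2: "\<not> F 0 > 2"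
proof
  assume F0: "F 0 > 2"
  have "eventually (\<lambda>y. F y < 2) at_top" using Fto0 by (rule order_tendstoD) simp
  then obtain Y where Y: "\<And>y. y \<ge> Y \<Longrightarrow> F y < 2" by (auto simp: eventually_at_top_linorder)
  define S where "S = {y. 0 \<le> y \<and> F y \<le> 2}"
  have ne: "S \<noteq> {}" using Y[of "max Y 0"] by (auto simp: S_def intro!: exI[of _ "max Y 0"])
  have bdd: "bdd_below S" by (auto simp: S_def bdd_below_def)
  have cl: "closed S" unfolding S_def
    by (intro closed_Collect_conj closed_Collect_le continuous_intros Fcont)
  define t where "t = Inf S"
  have tS: "t \<in> S" unfolding t_def by (rule closed_contains_Inf[OF ne bdd cl])
  have below: "F z > 2" if "0 \<le> z" "z < t" for z
  proof (rule ccontr)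
    assume "\<not> F z > 2" then have "z \<in> S" using that by (auto simp: S_def)
    then have "t \<le> z" unfolding t_def using bdd by (rule cInf_lower)
    then show False using that by simp
  qed
  have t0: "t > 0" using tS F0 by (cases "t = 0") (auto simp: S_def)
  have hpos: "h z \<ge> 0" if "0 \<le> z" "z < t" for z
  proof -
    have "h 0 \<le> h z"
    proof (rule DERIV_nonneg_imp_increasing_open[OF that(1) _ hcont])
      fix x assume "0 < x" "x < z"
      then have "F x > 2" using below that by auto
      then have "hd x \<ge> 0" by (intro hd_nonneg) simp
      then show "\<exists>y. DERIV h x :> y \<and> 0 \<le> y" using hD by blast
    qed
    then show ?thesis by (simp add: h_def d0)
  qed
  have "F 0 \<le> F t"
  proof (rule DERIV_nonneg_imp_increasing_open[OF less_imp_le[OF t0] _ Fcont])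
    fix x assume "0 < x" "x < t"
    then have "F' x \<ge> 0" using hpos F'_nonneg by simp
    then show "\<exists>y. DERIV F x :> y \<and> 0 \<le> y" using deriv1 by blast
  qed
  then show False using tS F0 by (auto simp: S_def)
qed


lemma not_eq2: "F 0 \<noteq> 2"
proof
  assume F0: "F 0 = 2"
  define P where "P z \<longleftrightarrow> F z = 2 \<and> F' z = 0" for z
  define S where "S = {y. 0 \<le> y \<and> (\<forall>z\<in>{0..y}. P z)}"
  have S0: "0 \<in> S" using F0 d0 by (auto simp: S_def P_def)
  have "eventually (\<lambda>y. F y < 1) at_top" using Fto0 by (rule order_tendstoD) simp
  then obtain Y where Y: "\<And>y. y \<ge> Y \<Longrightarrow> F y < 1" by (auto simp: eventually_at_top_linorder)
  have bdd: "bdd_above S"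
    unfolding bdd_above_def
  proof (intro exI ballI)
    fix y assume "y \<in> S"
    then have "P y" by (auto simp: S_def)
    then show "y \<le> Y" using Y[of y] by (cases "y \<le> Y") (auto simp: P_def)
  qed
  define s where "s = Sup S"
  have s0: "0 \<le> s" unfolding s_def using bdd S0 by (rule cSup_upper[rotated])
  have Pbelow: "P z" if zz: "0 \<le> z" "z < s" for z
  proof -
    obtain y where "y \<in> S" "z < y" using zz(2) less_cSup_iff[of S z] S0 bdd unfolding s_def by blast
    then show ?thesis using zz by (auto simp: S_def)
  qed
  have cl: "closed {z. P z}" unfolding P_def
    by (intro closed_Collect_conj closed_Collect_eq continuous_intros Fcont F'cont)
  have sS: "P z" if "z \<in> {0..s}" for z
  proof (cases "s = 0")
    case True then show ?thesis using S0 that by (auto simp: S_def)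
  next
    case False
    then have "closure {0..<s} = {0..s}" using s0 by (intro closure_atLeastLessThan) simp
    moreover have "closure {0..<s} \<subseteq> {z. P z}"
      by (rule closure_minimal[OF _ cl]) (use Pbelow in auto)
    ultimately show ?thesis using that by auto
  qed
  have "bounded ((\<lambda>z. exp (z^2/2) * F z) ` {s..s+1})"
    by (intro compact_imp_bounded compact_continuous_image continuous_intros Fcont) (auto intro: compact_Icc)
  then obtain a where a: "\<And>z. z \<in> {s..s+1} \<Longrightarrow> \<bar>exp (z^2/2) * F z\<bar> \<le> a"
    unfolding bounded_real by blast
  define K where "K = max a 1"
  have K1: "K \<ge> 1" by (simp add: K_def)
  have Ka: "\<bar>exp (z^2/2) * F z\<bar> \<le> K" if "z \<in> {s..s+1}" for z
    using a[OF that] unfolding K_def by linarith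
  define d where "d = 1 / (2*K)"
  have d0': "d > 0" and d2: "d \<le> 1/2" and Kd: "K * d = 1/2"
    using K1 by (auto simp: d_def field_simps)
  define I where "I = {s..s+d}"
  have I1: "I \<subseteq> {s..s+1}" using d2 by (auto simp: I_def)
  have cI: "compact I" "I \<noteq> {}" using d0' by (auto simp: I_def)
  obtain za where za: "za \<in> I" "\<And>z. z \<in> I \<Longrightarrow> \<bar>F z - 2\<bar> \<le> \<bar>F za - 2\<bar>"
  proof -
    have "continuous_on I (\<lambda>z. \<bar>F z - 2\<bar>)" by (intro continuous_intros Fcont)
    from continuous_attains_sup[OF cI this] show ?thesis using that by blast
  qed
  obtain zb where zb: "zb \<in> I" "\<And>z. z \<in> I \<Longrightarrow> \<bar>F' z\<bar> \<le> \<bar>F' zb\<bar>"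
  proof -
    have "continuous_on I (\<lambda>z. \<bar>F' z\<bar>)" by (intro continuous_intros F'cont)
    from continuous_attains_sup[OF cI this] show ?thesis using that by blast
  qed
  define A where "A = \<bar>F za - 2\<bar>"
  define B where "B = \<bar>F' zb\<bar>"
  have Ps: "P s" using sS s0 by auto
  have gB: "\<bar>F z - 2\<bar> \<le> d * B" if z: "z \<in> I" for z
  proof (cases "z = s")
    case True then show ?thesis using Ps d0' by (auto simp: P_def B_def)
  next
    case False
    then have sz: "s < z" using z by (auto simp: I_def)
    obtain xi where xi: "s < xi" "xi < z" "F z - F s = (z - s) * F' xi"
      using MVT2[OF sz, of F F'] deriv1 by blast
    have "xi \<in> I" using xi z by (auto simp: I_def)
    then have "\<bar>F' xi\<bar> \<le> B" using zb by (simp add: B_def)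
    moreover have "\<bar>z - s\<bar> \<le> d" using z sz by (auto simp: I_def)
    ultimately have "\<bar>z - s\<bar> * \<bar>F' xi\<bar> \<le> d * B" by (intro mult_mono) auto
    then show ?thesis using xi(3) Ps by (simp add: P_def abs_mult)
  qed
  have hA: "\<bar>F' z\<bar> \<le> d * (K * A)" if z: "z \<in> I" for z
  proof (cases "z = s")
    case True then show ?thesis using Ps d0' K1 by (auto simp: P_def A_def)
  next
    case False
    then have sz: "s < z" using z by (auto simp: I_def)
    obtain xi where xi: "s < xi" "xi < z" "h z - h s = (z - s) * hd xi"
      using MVT2[OF sz, of h hd] hD by blast
    have xiI: "xi \<in> I" using xi z by (auto simp: I_def)
    have "\<bar>hd xi\<bar> = \<bar>exp (xi^2/2) * F xi\<bar> * \<bar>F xi - 2\<bar>"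
      by (simp add: hd_def abs_mult)
    also have "\<dots> \<le> K * A"
      using Ka[of xi] xiI I1 za(2)[OF xiI] by (intro mult_mono) (auto simp: A_def)
    finally have "\<bar>hd xi\<bar> \<le> K * A" .
    moreover have "\<bar>z - s\<bar> \<le> d" using z sz by (auto simp: I_def)
    ultimately have "\<bar>z - s\<bar> * \<bar>hd xi\<bar> \<le> d * (K * A)" by (intro mult_mono) auto
    moreover have "h s = 0" using Ps by (simp add: P_def h_def)
    ultimately have "\<bar>h z\<bar> \<le> d * (K * A)" using xi(3) by (simp add: abs_mult)
    then show ?thesis using F'_le_h[of z] by linarith
  qed
  have "A \<le> d * B" unfolding A_def using gB za(1) by simp
  also have "\<dots> \<le> d * (d * (K * A))" using hA[OF zb(1)] d0' by (intro mult_left_mono) (auto simp: B_def)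
  also have "\<dots> = d * A / 2" using Kd by (simp add: algebra_simps)
  finally have "A \<le> d * A / 2" .
  moreover have "A \<ge> 0" by (simp add: A_def)
  moreover have "d * A \<le> A" using d2 \<open>A \<ge> 0\<close> d0' by (intro mult_left_le_one_le) auto
  ultimately have A0: "A = 0" by linarith
  have PI: "P z" if "z \<in> I" for z
    using gB[OF that] hA[OF that] za(2)[OF that] A0 by (auto simp: P_def A_def)
  have "s + d \<in> S" unfolding S_def
  proof (intro CollectI conjI ballI)
    show "0 \<le> s + d" using s0 d0' by simp
    fix z assume "z \<in> {0..s+d}"
    then show "P z" using sS PI by (cases "z \<le> s") (auto simp: I_def)
  qed
  then have "s + d \<le> s" unfolding s_def using bdd by (rule cSup_upper)
  then show False using d0' by simp
qed


lemma lt2: "F 0 < 2" using not_gt2 not_eq2 by linarith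

lemma Flt2: "y \<ge> 0 \<Longrightarrow> F y < 2"
proof (rule ccontr)
  assume y: "y \<ge> 0" and ny: "\<not> F y < 2"
  define S where "S = {y. 0 \<le> y \<and> F y \<ge> 2}"
  have ne: "S \<noteq> {}" using y ny by (auto simp: S_def)
  have bdd: "bdd_below S" by (auto simp: S_def bdd_below_def)
  have cl: "closed S" unfolding S_def
    by (intro closed_Collect_conj closed_Collect_le continuous_intros Fcont)
  define t where "t = Inf S"
  have tS: "t \<in> S" unfolding t_def by (rule closed_contains_Inf[OF ne bdd cl])
  have below: "F z < 2" if "0 \<le> z" "z < t" for z
  proof (rule ccontr)
    assume "\<not> F z < 2" then have "z \<in> S" using that by (auto simp: S_def)
    then have "t \<le> z" unfolding t_def using bdd by (rule cInf_lower)
    then show False using that by simp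
  qed
  have t0: "t > 0" using tS lt2 by (cases "t = 0") (auto simp: S_def)
  have hneg: "h z \<le> 0" if "0 \<le> z" "z < t" for z
  proof -
    have "h 0 \<ge> h z"
    proof (rule DERIV_nonpos_imp_decreasing_open[OF that(1) _ hcont])
      fix x assume "0 < x" "x < z"
      then have "F x < 2" using below that by auto
      then have "hd x \<le> 0" by (intro hd_nonpos) simp
      then show "\<exists>y. DERIV h x :> y \<and> y \<le> 0" using hD by blast
    qed
    then show ?thesis by (simp add: h_def d0)
  qed
  have "F 0 \<ge> F t"
  proof (rule DERIV_nonpos_imp_decreasing_open[OF less_imp_le[OF t0] _ Fcont])
    fix x assume "0 < x" "x < t"
    then have "F' x \<le> 0" using hneg F'_nonpos by simp
    then show "\<exists>y. DERIV F x :> y \<and> y \<le> 0" using deriv1 by blast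
  qed
  then show False using tS lt2 by (auto simp: S_def)
qed

lemma F'neg: "y > 0 \<Longrightarrow> F' y < 0"
proof -
  assume y: "y > 0"
  have "h 0 > h y"
  proof (rule DERIV_neg_imp_decreasing[OF y])
    fix x assume "0 \<le> x" "x \<le> y"
    then have "hd x < 0" using Flt2 hd_neg by simp
    then show "\<exists>z. DERIV h x :> z \<and> z < 0" using hD by blast
  qed
  then have "h y < 0" by (simp add: h_def d0)
  then show ?thesis by (rule F'_neg)
qed

lemma partd: "0 \<le> x \<Longrightarrow> x < y \<Longrightarrow> F y < F x"
proof -
  assume xy: "0 \<le> x" "x < y"
  define m where "m = (x + y) / 2"
  have m: "x < m" "m < y" using xy by (auto simp: m_def)
  have "F m \<le> F x"
  proof (rule DERIV_nonpos_imp_decreasing_open[OF less_imp_le[OF m(1)] _ Fcont])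
    fix z assume "x < z" "z < m"
    then have "F' z \<le> 0" using F'neg[of z] xy by simp
    then show "\<exists>w. DERIV F z :> w \<and> w \<le> 0" using deriv1 by blast
  qed
  moreover have "F y < F m"
  proof (rule DERIV_neg_imp_decreasing[OF m(2)])
    fix z assume "m \<le> z" "z \<le> y"
    then have "F' z < 0" using F'neg[of z] xy m by simp
    then show "\<exists>w. DERIV F z :> w \<and> w < 0" using deriv1 by blast
  qed
  ultimately show ?thesis by simp
qed

lemma F'to0: "(F' \<longlongrightarrow> 0) at_top"
proof -
  have l: "((\<lambda>y::real. y^2 * exp (- (y^2) / 2)) \<longlongrightarrow> 0) at_top" by real_asymp
  have "((\<lambda>y. (exp (y^2 / 2) * F' y / y^2) * (y^2 * exp (- (y^2) / 2))) \<longlongrightarrow> - c0 * 0) at_top"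
    by (intro tendsto_intros partb l)
  moreover have "eventually (\<lambda>y. (exp (y^2 / 2) * F' y / y^2) * (y^2 * exp (- (y^2) / 2)) = F' y) at_top"
    using eventually_gt_at_top[of 0]
    by eventually_elim (simp add: field_simps exp_add[symmetric])
  ultimately show ?thesis by (auto intro: Lim_transform_eventually)
qed

lemma gt1: "F 0 > 1"
proof (rule ccontr)
  assume "\<not> F 0 > 1"
  then have F1: "F y < 1" if "y > 0" for y using partd[of 0 y] that by simp
  define Phi where "Phi y = F' y + y * F y" for y
  have PD: "DERIV Phi y :> F y * (F y - 1)" for y unfolding Phi_def by (rule PhiD)
  have Pneg: "F y * (F y - 1) < 0" if "y > 0" for y
    using F1[OF that] pos[of y] by (intro mult_pos_neg) auto
  have Pcont: "continuous_on S Phi" for S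
    by (meson DERIV_isCont continuous_at_imp_continuous_on PD)
  have "Phi (1/2) \<le> Phi 0"
  proof (rule DERIV_nonpos_imp_decreasing_open[of 0 "1/2", OF _ _ Pcont])
    fix x :: real assume "0 < x" "x < 1/2"
    then show "\<exists>y. DERIV Phi x :> y \<and> y \<le> 0" using PD Pneg[of x] less_imp_le by blast
  qed simp
  moreover have "Phi 1 < Phi (1/2)"
  proof (rule DERIV_neg_imp_decreasing[of "1/2" 1])
    fix x :: real assume "1/2 \<le> x" "x \<le> 1"
    then show "\<exists>y. DERIV Phi x :> y \<and> y < 0" using PD Pneg[of x] by auto
  qed simp
  ultimately have P1: "Phi 1 < 0" by (simp add: Phi_def d0)
  have ev: "eventually (\<lambda>y. Phi y \<le> Phi 1) at_top"
    using eventually_ge_at_top[of 1]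
  proof eventually_elim
    case (elim y)
    show ?case
    proof (rule DERIV_nonpos_imp_decreasing_open[OF elim _ Pcont])
      fix x :: real assume "1 < x" "x < y"
      then show "\<exists>z. DERIV Phi x :> z \<and> z \<le> 0" using PD Pneg[of x] less_imp_le by auto
    qed
  qed
  have "(Phi \<longlongrightarrow> 0 + 0) at_top" unfolding Phi_def by (intro tendsto_intros F'to0 yFto0)
  then have "0 \<le> Phi 1" using ev by (intro tendsto_upperbound) auto
  then show False using P1 by simp
qed

end

theorem lemma3p2:
  fixes F F' F'' :: "real \<Rightarrow> real" and c0 :: real
  assumes deriv1: "\<And>x. (F has_real_derivative F' x) (at x)"
    and deriv2: "\<And>x. (F' has_real_derivative F'' x) (at x)"
    and cont2: "continuous_on UNIV F''"
    and sym: "\<And>x. F (- x) = F x"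
    and pos: "\<And>x. F x > 0"
    and ode: "\<And>y. F'' y / 2 + y / 2 * F' y + F y - (F y)^2 / 2 = 0"
    and d0: "F' 0 = 0"
    and c0_pos: "c0 > 0"
    and asym: "((\<lambda>y. F y / (c0 * y * exp (- (y^2) / 2))) \<longlongrightarrow> 1) at_top"
  shows "(\<forall>x0 y. 0 \<le> x0 \<and> x0 \<le> y \<longrightarrow>
            F' y = exp (- (y^2) / 2 + x0^2 / 2) * F' x0
                   + integral {x0..y} (\<lambda>z. exp (- (y^2) / 2 + z^2 / 2) * F z * (F z - 2)))
       \<and> ((\<lambda>y. exp (y^2 / 2) * F' y / y^2) \<longlongrightarrow> - c0) at_top
       \<and> 1 < F 0 \<and> F 0 < 2
       \<and> (\<forall>x y. 0 \<le> x \<and> x < y \<longrightarrow> F y < F x)"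
proof -
  interpret fsetup F F' F'' c0 using deriv1 deriv2 pos ode d0 c0_pos asym by unfold_locales
  show ?thesis using parta partb lt2 gt1 partd by blast
qed

end
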